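(* Let $(X,s)$ be a complete strong partial metric space, let $x_o\in X$, and let $f:X\to X$ be a Cauchy function at $x_o$. If $f$ is non-expansive, then $f$ has a fixed point.
   Context: A strong partial metric on $X$ is $s:X\times X\to\mathbb{R}$ with, for all $x,y,z$: $s(x,x)<s(x,y)$ whenever $x\neq y$; $s(x,y)=s(y,x)$; $s(x,y)\le s(x,z)+s(z,y)-s(z,z)$. A point $a$ is a limit of $\{x_i\}$ iff for every $\epsilon>0$ there is $N$ with $s(a,x_i)-s(a,a)<\epsilon$ for all $i>N$ (convergence in the topology generated by the balls $\{y\mid s(x,y)-s(x,x)<\epsilon\}$). $\{x_i\}$ is Cauchy with central distance $r$ if for every $\epsilon>0$ there is $N$ with $|s(x_i,x_j)-r|<\epsilon$ for $i\ge j>N$; a special limit is a limit $a$ with $s(a,a)=r$; $(X,s)$ is complete if every Cauchy sequence has a special limit. $f$ is a Cauchy function at $x_o$ if the orbit $\{f^i(x_o)\}$ ($f^0(x_o)=x_o$, $f^{i+1}(x_o)=f(f^i(x_o))$) is Cauchy. $f$ is non-expansive if $s(f(x),f(y))\le s(x,y)$ for all $x,y$. *)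

theory Defs
  imports Main "HOL.Real"
begin

definition strong_partial_metric :: "('a \<Rightarrow> 'a \<Rightarrow> real) \<Rightarrow> bool" where
  "strong_partial_metric s \<longleftrightarrow>
     (\<forall>x y. x \<noteq> y \<longrightarrow> s x x < s x y) \<and>
     (\<forall>x y. s x y = s y x) \<and>
     (\<forall>x y z. s x y \<le> s x z + s z y - s z z)"

definition spm_limit :: "('a \<Rightarrow> 'a \<Rightarrow> real) \<Rightarrow> (nat \<Rightarrow> 'a) \<Rightarrow> 'a \<Rightarrow> bool" where
  "spm_limit s x a \<longleftrightarrow>
     (\<forall>\<epsilon>>0. \<exists>N. \<forall>i>N. s a (x i) - s a a < \<epsilon>)"

definition spm_cauchy_with :: "('a \<Rightarrow> 'a \<Rightarrow> real) \<Rightarrow> (nat \<Rightarrow> 'a) \<Rightarrow> real \<Rightarrow> bool" where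
  "spm_cauchy_with s x r \<longleftrightarrow>
     (\<forall>\<epsilon>>0. \<exists>N. \<forall>i j. i \<ge> j \<and> j > N \<longrightarrow> \<bar>s (x i) (x j) - r\<bar> < \<epsilon>)"

definition spm_cauchy :: "('a \<Rightarrow> 'a \<Rightarrow> real) \<Rightarrow> (nat \<Rightarrow> 'a) \<Rightarrow> bool" where
  "spm_cauchy s x \<longleftrightarrow> (\<exists>r. spm_cauchy_with s x r)"

definition spm_complete :: "('a \<Rightarrow> 'a \<Rightarrow> real) \<Rightarrow> bool" where
  "spm_complete s \<longleftrightarrow>
     (\<forall>x r. spm_cauchy_with s x r \<longrightarrow> (\<exists>a. spm_limit s x a \<and> s a a = r))"

definition cauchy_function_at :: "('a \<Rightarrow> 'a \<Rightarrow> real) \<Rightarrow> ('a \<Rightarrow> 'a) \<Rightarrow> 'a \<Rightarrow> bool" where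
  "cauchy_function_at s f x0 \<longleftrightarrow> spm_cauchy s (\<lambda>i. (f ^^ i) x0)"

definition non_expansive :: "('a \<Rightarrow> 'a \<Rightarrow> real) \<Rightarrow> ('a \<Rightarrow> 'a) \<Rightarrow> bool" where
  "non_expansive s f \<longleftrightarrow> (\<forall>x y. s (f x) (f y) \<le> s x y)"

end

theory Submission
  imports Defs
begin

theorem theorem7p12:
  fixes s :: "'a \<Rightarrow> 'a \<Rightarrow> real" and f :: "'a \<Rightarrow> 'a" and x0 :: 'a
  assumes "strong_partial_metric s"
    and "spm_complete s"
    and "cauchy_function_at s f x0"
    and "non_expansive s f"
  shows "\<exists>x. f x = x"
proof -
  define x where "x = (\<lambda>i. (f ^^ i) x0)"
  have xs: "x (Suc k) = f (x k)" for k by (simp add: x_def)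
  from assms(3) obtain r where cw: "spm_cauchy_with s x r"
    unfolding cauchy_function_at_def spm_cauchy_def x_def by blast
  with assms(2) obtain a where lim: "spm_limit s x a" and aa: "s a a = r"
    unfolding spm_complete_def by blast
  have sym: "\<And>u v. s u v = s v u" and tri: "\<And>u v w. s u v \<le> s u w + s w v - s w w"
    and str: "\<And>u v. u \<noteq> v \<Longrightarrow> s u u < s u v"
    using assms(1) unfolding strong_partial_metric_def by blast+
  have ne: "\<And>u v. s (f u) (f v) \<le> s u v" using assms(4) unfolding non_expansive_def by blast
  show ?thesis
  proof (rule ccontr)
    assume "\<not> ?thesis"
    hence "f a \<noteq> a" by blast
    hence lt: "r < s a (f a)" using str[of a "f a"] aa by auto
    define e where "e = (s a (f a) - r) / 3"
    have e: "e > 0" using lt by (simp add: e_def)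
    obtain N1 where N1: "\<And>i. i > N1 \<Longrightarrow> s a (x i) - s a a < e"
      using lim e unfolding spm_limit_def by blast
    obtain N2 where N2: "\<And>i j. i \<ge> j \<Longrightarrow> j > N2 \<Longrightarrow> \<bar>s (x i) (x j) - r\<bar> < e"
      using cw e unfolding spm_cauchy_with_def by blast
    define k where "k = Suc (N1 + N2)"
    have h1: "s a (x k) < r + e" using N1[of k] aa by (simp add: k_def)
    have h2: "s a (x (Suc k)) < r + e" using N1[of "Suc k"] aa by (simp add: k_def)
    have h3: "s (x (Suc k)) (f a) < r + e"
      using ne[of "x k" a] h1 xs[of k] sym[of a "x k"] by simp
    have h4: "s (x (Suc k)) (x (Suc k)) > r - e"
      using N2[of "Suc k" "Suc k"] by (simp add: k_def)
    have "s a (f a) \<le> s a (x (Suc k)) + s (x (Suc k)) (f a) - s (x (Suc k)) (x (Suc k))"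
      by (rule tri)
    hence "s a (f a) < r + 3 * e" using h2 h3 h4 by linarith
    moreover have "3 * e = s a (f a) - r" by (simp add: e_def)
    ultimately show False by linarith
  qed
qed

end
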